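(* Fix $\mu>-3/2$, $z>0$, and let $u_y$ and $M_y$ be as in the context. Then as $y\downarrow0$, $$u_y=\frac{\log(y)^2}{4y^2}\left[1-\frac{2\log\log(1/y)}{\log(y)}+\frac{\log(z^2)}{\log(y)}+o\!\left(\frac{1}{\log(y)}\right)\right],$$ and $$M_y=\frac{y^3}{\log(y)^2}\left[1+\mathcal{O}\!\left(\frac{\log|\log(y)|}{\log(y)}\right)\right].$$
   Context: For $y>0$, $u_y$ denotes the largest positive solution $u$ of $2\mu-1+4uy+2\log(z/2)\sqrt{u}-\sqrt{u}\log(u)=0$; $\alpha:=1+\log(z)-\log(2)$; and $M_y:=\frac{\log(u_y)}{16u_y^{3/2}}-\frac{\alpha}{8u_y^{3/2}}+\frac{1-2\mu}{8u_y^2}$. *)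

theory Defs
  imports "HOL-Analysis.Analysis" "HOL-Library.Landau_Symbols"
begin

definition u_y :: "real \<Rightarrow> real \<Rightarrow> real \<Rightarrow> real" where
  "u_y \<mu> z y = (GREATEST u. u > 0 \<and>
      2*\<mu> - 1 + 4*u*y + 2*ln (z/2) * sqrt u - sqrt u * ln u = 0)"

definition alpha :: "real \<Rightarrow> real" where
  "alpha z = 1 + ln z - ln 2"

definition M_y :: "real \<Rightarrow> real \<Rightarrow> real \<Rightarrow> real" where
  "M_y \<mu> z y = (let u = u_y \<mu> z y in
      ln u / (16 * u powr (3/2)) - alpha z / (8 * u powr (3/2)) + (1 - 2*\<mu>) / (8 * u^2))"

end

theory Submission
  imports Defs "HOL-Real_Asymp.Real_Asymp"
begin

definition Am :: "real \<Rightarrow> real \<Rightarrow> real" where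
  "Am b y = ln (1/y) + ln (ln (1/y)) - b"
definition Ap :: "real \<Rightarrow> real \<Rightarrow> real" where
  "Ap b y = ln (1/y) + ln (ln (1/y)) - b + 2 * ln (ln (1/y)) / ln (1/y)"

definition HH :: "real \<Rightarrow> real \<Rightarrow> real \<Rightarrow> real \<Rightarrow> real" where
  "HH \<mu> z y s = 2* y* s - (ln 2 + ln s - ln z) + (2*\<mu>-1)/(2* s)"

lemma squeeze_small:
  fixes f lo hi h :: "real \<Rightarrow> real"
  assumes "eventually (\<lambda>x. lo x \<le> f x \<and> f x \<le> hi x) F"
    "lo \<in> o[F](h)" "hi \<in> o[F](h)"
  shows "f \<in> o[F](h)"
proof -
  have "f \<in> O[F](\<lambda>x. \<bar>lo x\<bar> + \<bar>hi x\<bar>)"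
    by (rule bigoI[where c=1]) (use assms(1) in \<open>auto elim!: eventually_mono\<close>)
  moreover have "(\<lambda>x. \<bar>lo x\<bar> + \<bar>hi x\<bar>) \<in> o[F](h)"
    using assms(2,3) by (intro sum_in_smallo) simp_all
  ultimately show ?thesis by (rule landau_o.big_small_trans)
qed

lemma squeeze_big:
  fixes f lo hi h :: "real \<Rightarrow> real"
  assumes "eventually (\<lambda>x. lo x \<le> f x \<and> f x \<le> hi x) F"
    "lo \<in> O[F](h)" "hi \<in> O[F](h)"
  shows "f \<in> O[F](h)"
proof -
  have "f \<in> O[F](\<lambda>x. \<bar>lo x\<bar> + \<bar>hi x\<bar>)"
    by (rule bigoI[where c=1]) (use assms(1) in \<open>auto elim!: eventually_mono\<close>)
  moreover have "(\<lambda>x. \<bar>lo x\<bar> + \<bar>hi x\<bar>) \<in> O[F](h)"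
    using assms(2,3) by (intro sum_in_bigo) simp_all
  ultimately show ?thesis by (rule landau_o.big_trans)
qed

lemma cond_iff:
  fixes s z y \<mu> :: real
  assumes "s > 0" "z > 0"
  shows "(2*\<mu> - 1 + 4*(s^2)* y + 2* ln (z/2) * sqrt (s^2) - sqrt (s^2) * ln (s^2) = 0)
         \<longleftrightarrow> HH \<mu> z y s = 0"
proof -
  have a: "sqrt (s^2) = s" using assms by simp
  have b: "ln (s^2) = 2 * ln s" using assms by (simp add: ln_realpow)
  have c: "ln (z/2) = ln z - ln 2" using assms by (simp add: ln_div)
  have "2*\<mu> - 1 + 4*(s^2)* y + 2* ln (z/2) * sqrt (s^2) - sqrt (s^2) * ln (s^2)
        = 2 * s * HH \<mu> z y s"
    unfolding a b c HH_def using assms by (simp add: field_simps power2_eq_square)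
  then show ?thesis using assms by simp
qed

lemma HH_pos:
  fixes s b z y \<mu> :: real
  assumes "y > 0" "z > 0" "b > 0" "s \<ge> b" "2* y* b \<ge> 1"
    "2* y* b - (ln 2 + ln b - ln z) - \<bar>2*\<mu>-1\<bar>/(2* b) > 0"
  shows "HH \<mu> z y s > 0"
proof -
  have sp: "s > 0" using assms by linarith
  have l1: "ln s - ln b \<le> s/b - 1"
    using ln_le_minus_one[of "s/b"] assms sp by (simp add: ln_div)
  have l2: "(2*\<mu>-1)/(2* s) \<ge> - (\<bar>2*\<mu>-1\<bar>/(2* b))"
  proof -
    have "\<bar>2*\<mu>-1\<bar>/(2* s) \<le> \<bar>2*\<mu>-1\<bar>/(2* b)"
      using assms sp by (intro divide_left_mono) auto
    moreover have "-(\<bar>2*\<mu>-1\<bar>/(2* s)) \<le> (2*\<mu>-1)/(2* s)"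
    proof -
      have "\<bar>(2*\<mu>-1)/(2* s)\<bar> = \<bar>2*\<mu>-1\<bar>/(2* s)" using sp by (simp add: abs_divide)
      then show ?thesis by linarith
    qed
    ultimately show ?thesis by linarith
  qed
  have l3: "2* y* s - s/b + 1 \<ge> 2* y* b"
  proof -
    have "2* y - 1/b \<ge> 0" using assms by (simp add: field_simps)
    then have "(s - b) * (2* y - 1/b) \<ge> 0" using assms by simp
    then show ?thesis using assms by (simp add: field_simps)
  qed
  show ?thesis unfolding HH_def using l1 l2 l3 assms by linarith
qed

lemma key:
  fixes \<mu> z y a b :: real
  assumes "y > 0" "z > 0" "a > 0" "a \<le> b" "HH \<mu> z y a < 0" "2* y* b \<ge> 1"
    "2* y* b - (ln 2 + ln b - ln z) - \<bar>2*\<mu>-1\<bar>/(2* b) > 0"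
  shows "\<exists>s. a \<le> s \<and> s \<le> b \<and> u_y \<mu> z y = s^2"
proof -
  have bpos: "b > 0" using assms by linarith
  have cont: "continuous_on {a..b} (HH \<mu> z y)"
    unfolding HH_def using assms by (intro continuous_intros) auto
  have hb: "HH \<mu> z y b > 0" using HH_pos[OF assms(1,2) bpos _ assms(6,7)] by simp
  define Z where "Z = {s \<in> {a..b}. HH \<mu> z y s = 0}"
  have "\<exists>x. a \<le> x \<and> x \<le> b \<and> HH \<mu> z y x = 0"
    using IVT'[of "HH \<mu> z y" a 0 b] assms hb cont by auto
  then have ne: "Z \<noteq> {}" unfolding Z_def by auto
  have "closed Z"
  proof -
    have "closed ({a..b} \<inter> HH \<mu> z y -` {0})"
      by (rule continuous_closed_preimage[OF cont]) auto
    moreover have "Z = {a..b} \<inter> HH \<mu> z y -` {0}" unfolding Z_def by auto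
    ultimately show ?thesis by simp
  qed
  moreover have "bounded Z" unfolding Z_def
    by (rule bounded_subset[of "{a..b}"]) auto
  ultimately have "compact Z" by (simp add: compact_eq_bounded_closed)
  then obtain s where sZ: "s \<in> Z" and smax: "\<forall>t\<in>Z. t \<le> s"
    using compact_attains_sup[OF _ ne] by blast
  have sab: "a \<le> s" "s \<le> b" and hs: "HH \<mu> z y s = 0" using sZ unfolding Z_def by auto
  have spos: "s > 0" using sab assms by linarith
  let ?P = "\<lambda>u. u > 0 \<and> 2*\<mu> - 1 + 4* u* y + 2* ln (z/2) * sqrt u - sqrt u * ln u = 0"
  have "?P (s^2)" using cond_iff[OF spos assms(2), of \<mu> y] hs spos by simp
  moreover have "u \<le> s^2" if "?P u" for u
  proof -
    define t where "t = sqrt u"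
    have tpos: "t > 0" and ut: "u = t^2" using that unfolding t_def by auto
    have ht: "HH \<mu> z y t = 0" using cond_iff[OF tpos assms(2), of \<mu> y] that ut by simp
    have "t < b"
    proof (rule ccontr)
      assume "\<not> t < b"
      then have "HH \<mu> z y t > 0" using HH_pos[OF assms(1,2) bpos _ assms(6,7)] by simp
      with ht show False by simp
    qed
    have "t \<le> s"
    proof (cases "t \<ge> a")
      case True
      then have "t \<in> Z" unfolding Z_def using ht \<open>t < b\<close> by auto
      then show ?thesis using smax by auto
    next
      case False then show ?thesis using sab by linarith
    qed
    then show ?thesis unfolding ut using tpos by (intro power_mono) auto
  qed
  ultimately have "u_y \<mu> z y = s^2" unfolding u_y_def by (intro Greatest_equality) auto
  then show ?thesis using sab by blast
qed


lemma M_ident: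
  fixes y s a c :: real
  assumes "y > 0" "s > 0"
  shows "(ln (s^2)/(16 * (s^2) powr (3/2)) - a/(8 * (s^2) powr (3/2)) + c/(8 * (s^2)^2)) / (y^3/ln y^2) - 1
     = (ln (2 * y * s) - ln 2 + ln (1/y) - a) * ln y^2 / (2 * y * s)^3 + 2 * c * y * ln y^2/(2 * y * s)^4 - 1"
proof -
  have p: "(s^2) powr (3/2) = s^3"
  proof -
    have h1: "s powr 2 = s^2" using powr_numeral[OF less_imp_le[OF assms(2)], of "num.Bit0 num.One"] by simp
    have h2: "s powr 3 = s^3" using powr_numeral[OF less_imp_le[OF assms(2)], of "num.Bit1 num.One"] by simp
    have "(s powr 2) powr (3/2) = s powr 3" by (simp add: powr_powr)
    then show ?thesis using h1 h2 by simp
  qed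
  have l: "ln (s^2) = 2 * ln s" using assms by (simp add: ln_realpow)
  have l2: "ln (2 * y * s) - ln 2 + ln (1/y) = ln s" using assms by (simp add: ln_mult ln_div)
  have e1: "(2 * y * s)^3 = 8 * y^3 * s^3" "(2 * y * s)^4 = 16 * y^4 * s^4" by (simp_all add: power_mult_distrib)
  have e2: "(s^2)^2 = s^4" by simp
  define Q where "Q = ln y ^ 2"
  have d: "x / (y^3 / Q) = x * Q / y^3" for x by simp
  have f1: "2 * ln s/(16 * s^3) - a/(8 * s^3) + c/(8 * s^4) = (ln s - a)/(8 * s^3) + c/(8 * s^4)"
    using assms by (simp add: field_simps)
  have f2: "((ln s - a)/(8 * s^3) + c/(8 * s^4)) * Q / y^3 = (ln s - a) * Q / (8 * y^3 * s^3) + 2 * c * y * Q/(16 * y^4 * s^4)"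
  proof -
    have "2 * c * y * Q/(16 * y^4 * s^4) = c * Q/(8 * y^3 * s^4)" using assms
      by (simp add: field_simps eval_nat_numeral)
    moreover have "((ln s - a)/(8 * s^3) + c/(8 * s^4)) * Q / y^3 = (ln s - a) * Q / (8 * y^3 * s^3) + c * Q/(8 * y^3 * s^4)"
      using assms by (simp add: field_simps)
    ultimately show ?thesis by simp
  qed
  show ?thesis unfolding p l l2 e1 e2 Q_def[symmetric] d f1 f2 ..
qed

lemma lin_aux: fixes p q t r :: real
  shows "p \<le> q \<Longrightarrow> \<bar>t\<bar> \<le> r \<Longrightarrow> p - r - 1 \<le> q + t - 1"
    "p \<le> q \<Longrightarrow> \<bar>t\<bar> \<le> r \<Longrightarrow> p + t - 1 \<le> q + r - 1"
  by (auto simp: abs_le_iff)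

lemma M_bounds:
  fixes y X A B a c Q :: real
  assumes "y > 0" "0 < A" "A \<le> X" "X \<le> B" "ln A - ln 2 + ln (1/y) - a > 0" "Q \<ge> 0"
  shows "(ln A - ln 2 + ln (1/y) - a) * Q / B^3 - 2*\<bar>c\<bar>* y*Q/A^4 - 1
       \<le> (ln X - ln 2 + ln (1/y) - a) * Q / X^3 + 2* c* y*Q/X^4 - 1"
    "(ln X - ln 2 + ln (1/y) - a) * Q / X^3 + 2* c* y*Q/X^4 - 1 \<le>
      (ln B - ln 2 + ln (1/y) - a) * Q / A^3 + 2*\<bar>c\<bar>* y*Q/A^4 - 1"
proof -
  have Xp: "X > 0" "B > 0" using assms by linarith+
  have n1: "ln A \<le> ln X" "ln X \<le> ln B" using assms Xp by auto
  define NA where "NA = (ln A - ln 2 + ln (1/y) - a) * Q"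
  define NX where "NX = (ln X - ln 2 + ln (1/y) - a) * Q"
  define NB where "NB = (ln B - ln 2 + ln (1/y) - a) * Q"
  have N: "0 \<le> NA" "NA \<le> NX" "NX \<le> NB" unfolding NA_def NX_def NB_def
    using assms n1 by (auto intro: mult_right_mono)
  have c3: "A^3 \<le> X^3" "X^3 \<le> B^3" using assms Xp by (auto intro: power_mono)
  have t1: "NA / B^3 \<le> NX / X^3"
    by (rule frac_le) (use N c3 Xp in auto)
  have t2: "NX / X^3 \<le> NB / A^3"
    by (rule frac_le) (use N c3 Xp assms in auto)
  have "\<bar>2* c* y*Q/X^4\<bar> = 2*\<bar>c\<bar>* y*Q / X^4" using assms Xp by (simp add: abs_mult abs_divide)
  also have "\<dots> \<le> 2*\<bar>c\<bar>* y*Q/A^4"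
    by (rule divide_left_mono) (use assms Xp in \<open>auto intro!: power_mono\<close>)
  finally have t3: "\<bar>2* c* y*Q/X^4\<bar> \<le> 2*\<bar>c\<bar>* y*Q/A^4" .
  show "(ln A - ln 2 + ln (1/y) - a) * Q / B^3 - 2*\<bar>c\<bar>* y*Q/A^4 - 1
       \<le> (ln X - ln 2 + ln (1/y) - a) * Q / X^3 + 2* c* y*Q/X^4 - 1"
    using lin_aux(1)[OF t1 t3] by (simp only: NA_def NX_def)
  show "(ln X - ln 2 + ln (1/y) - a) * Q / X^3 + 2* c* y*Q/X^4 - 1 \<le>
      (ln B - ln 2 + ln (1/y) - a) * Q / A^3 + 2*\<bar>c\<bar>* y*Q/A^4 - 1"
    using lin_aux(2)[OF t2 t3] by (simp only: NB_def NX_def)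
qed

lemma as1: "eventually (\<lambda>y::real. ln (ln (1/y)) - ln (Am b y) + c * y / Am b y < 0) (at_right 0)"
  unfolding Am_def by real_asymp
lemma as2: "eventually (\<lambda>y::real. ln (ln (1/y)) + 2 * ln (ln (1/y)) / ln (1/y) - ln (Ap b y) - c * y / Ap b y > 0) (at_right 0)"
  unfolding Ap_def by real_asymp
lemma as3: "eventually (\<lambda>y::real. Ap b y \<ge> 1) (at_right 0)"
  unfolding Ap_def by real_asymp
lemma as4: "eventually (\<lambda>y::real. Am b y > 0) (at_right 0)"
  unfolding Am_def by real_asymp
lemma as5: "eventually (\<lambda>y::real. ln (ln (1/y)) > 0) (at_right 0)"
  by real_asymp
lemma as6: "eventually (\<lambda>y::real. ln (1/y) > 0) (at_right 0)"
  by real_asymp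
lemma as7: "eventually (\<lambda>y::real. ln (Am b y) - ln 2 + ln (1/y) - a > 0) (at_right 0)"
  unfolding Am_def by real_asymp
lemma as8: "eventually (\<lambda>y::real. y > 0) (at_right 0)"
  by real_asymp
lemma as9: "(\<lambda>y. Ap b y ^2 / ln y ^ 2 - (1 - 2 * ln (ln (1/y)) / ln y + (2 * b) / ln y)) \<in> o[at_right 0](\<lambda>y. 1 / ln y)"
  unfolding Ap_def by real_asymp
lemma as10: "(\<lambda>y. Am b y ^2 / ln y ^ 2 - (1 - 2 * ln (ln (1/y)) / ln y + (2 * b) / ln y)) \<in> o[at_right 0](\<lambda>y. 1 / ln y)"
  unfolding Am_def by real_asymp
lemma as11: "(\<lambda>y. (ln (Am b y) - ln 2 + ln (1/y) - a) * ln y ^2 / Ap b y ^3 - c * y * ln y ^ 2 / Am b y ^ 4 - 1) \<in> O[at_right 0](\<lambda>y. ln \<bar>ln y\<bar> / ln y)"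
  unfolding Am_def Ap_def by real_asymp
lemma as12: "(\<lambda>y. (ln (Ap b y) - ln 2 + ln (1/y) - a) * ln y ^2 / Am b y ^3 + c * y * ln y ^ 2 / Am b y ^ 4 - 1) \<in> O[at_right 0](\<lambda>y. ln \<bar>ln y\<bar> / ln y)"
  unfolding Am_def Ap_def by real_asymp

lemma bracket:
  fixes \<mu> z y :: real
  assumes y: "y > 0" and z: "z > 0"
    and f1: "ln (ln (1/y)) - ln (Am (ln z) y) + \<bar>2 * \<mu>-1\<bar> * y / Am (ln z) y < 0"
    and f2: "ln (ln (1/y)) + 2 * ln (ln (1/y)) / ln (1/y) - ln (Ap (ln z) y) - \<bar>2 * \<mu>-1\<bar> * y / Ap (ln z) y > 0"
    and f3: "Ap (ln z) y \<ge> 1" and f4: "Am (ln z) y > 0" and f5: "ln (ln (1/y)) > 0" and f6: "ln (1/y) > 0"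
  shows "\<exists>s. Am (ln z) y/(2 * y) \<le> s \<and> s \<le> Ap (ln z) y/(2 * y) \<and> u_y \<mu> z y = s^2"
proof -
  define A where "A = Am (ln z) y"
  define B where "B = Ap (ln z) y"
  define L where "L = ln (1/y)"
  have ly: "ln y = - L" unfolding L_def using y by (simp add: ln_div)
  have Bp: "B > 0" using f3 unfolding B_def by linarith
  have AB: "A \<le> B" unfolding A_def B_def Am_def Ap_def using f5 f6 by simp
  have HA: "HH \<mu> z y (A/(2 * y)) = ln L - ln A + (2 * \<mu>-1) * y / A"
  proof -
    have "ln (A/(2 * y)) = ln A - ln 2 - ln y" using y f4 unfolding A_def by (simp add: ln_div ln_mult)
    moreover have "2 * y * (A/(2 * y)) = A" using y by simp
    moreover have "(2 * \<mu>-1)/(2 * (A/(2 * y))) = (2 * \<mu>-1) * y / A" using y by simp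
    moreover have "A = L + ln L - ln z" unfolding A_def Am_def L_def ..
    ultimately show ?thesis unfolding HH_def using ly by simp
  qed
  have cA: "(2 * \<mu>-1) * y / A \<le> \<bar>2 * \<mu>-1\<bar> * y / A"
    using y f4 unfolding A_def by (intro divide_right_mono mult_right_mono) auto
  have HAn: "HH \<mu> z y (A/(2 * y)) < 0" using HA cA f1 unfolding A_def L_def by linarith
  have HB: "2 * y * (B/(2 * y)) - (ln 2 + ln (B/(2 * y)) - ln z) - \<bar>2 * \<mu>-1\<bar>/(2 * (B/(2 * y)))
      = ln L + 2 * ln L / L - ln B - \<bar>2 * \<mu>-1\<bar> * y / B"
  proof -
    have "ln (B/(2 * y)) = ln B - ln 2 - ln y" using y Bp by (simp add: ln_div ln_mult)
    moreover have "2 * y * (B/(2 * y)) = B" using y by simp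
    moreover have "\<bar>2 * \<mu>-1\<bar>/(2 * (B/(2 * y))) = \<bar>2 * \<mu>-1\<bar> * y / B" using y by simp
    moreover have "B = L + ln L - ln z + 2 * ln L / L" unfolding B_def Ap_def L_def ..
    ultimately show ?thesis using ly by simp
  qed
  have "\<exists>s. A/(2 * y) \<le> s \<and> s \<le> B/(2 * y) \<and> u_y \<mu> z y = s^2"
  proof (rule key[OF y z])
    show "A/(2 * y) > 0" using y f4 unfolding A_def by simp
    show "A/(2 * y) \<le> B/(2 * y)" using AB y by (simp add: divide_right_mono)
    show "HH \<mu> z y (A/(2 * y)) < 0" by (rule HAn)
    show "2 * y * (B/(2 * y)) \<ge> 1" using y f3 unfolding B_def by simp
    show "2 * y * (B/(2 * y)) - (ln 2 + ln (B/(2 * y)) - ln z) - \<bar>2 * \<mu>-1\<bar>/(2 * (B/(2 * y))) > 0"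
      unfolding HB using f2 unfolding B_def L_def by linarith
  qed
  then show ?thesis unfolding A_def B_def .
qed

theorem mainTheorem3:
  fixes \<mu> z :: real
  assumes "\<mu> > -3/2" and "z > 0"
  shows "(\<lambda>y. u_y \<mu> z y / (ln y ^ 2 / (4 * y^2))
              - (1 - 2 * ln (ln (1/y)) / ln y + ln (z^2) / ln y))
           \<in> o[at_right 0](\<lambda>y. 1 / ln y) \<and>
         (\<lambda>y. M_y \<mu> z y / (y^3 / ln y ^ 2) - 1)
           \<in> O[at_right 0](\<lambda>y. ln \<bar>ln y\<bar> / ln y)"
proof -
  define b where "b = ln z"
  have lz: "ln (z^2) = 2 * b" unfolding b_def using assms(2) by (simp add: ln_realpow)
  have ev: "eventually (\<lambda>y. y > 0 \<and> (\<exists>s. Am b y/(2 * y) \<le> s \<and> s \<le> Ap b y/(2 * y) \<and> u_y \<mu> z y = s^2)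
      \<and> Am b y > 0 \<and> ln (Am b y) - ln 2 + ln (1/y) - alpha z > 0) (at_right 0)"
    using as1[of b "\<bar>2 * \<mu>-1\<bar>"] as2[of b "\<bar>2 * \<mu>-1\<bar>"] as3[of b] as4[of b] as5 as6 as7[of b "alpha z"] as8
  proof eventually_elim
    case (elim y)
    then show ?case using bracket[of y z \<mu>] assms(2) unfolding b_def by blast
  qed
  have P1: "(\<lambda>y. u_y \<mu> z y / (ln y ^ 2 / (4 * y^2))
              - (1 - 2 * ln (ln (1/y)) / ln y + ln (z^2) / ln y))
           \<in> o[at_right 0](\<lambda>y. 1 / ln y)"
    unfolding lz
  proof (rule squeeze_small[OF _ as10[of b] as9[of b]])
    show "\<forall>\<^sub>F y in at_right 0.
       Am b y ^2 / ln y ^ 2 - (1 - 2 * ln (ln (1/y)) / ln y + (2 * b) / ln y)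
       \<le> u_y \<mu> z y / (ln y ^ 2 / (4 * y^2)) - (1 - 2 * ln (ln (1/y)) / ln y + 2 * b / ln y) \<and>
       u_y \<mu> z y / (ln y ^ 2 / (4 * y^2)) - (1 - 2 * ln (ln (1/y)) / ln y + 2 * b / ln y)
       \<le> Ap b y ^2 / ln y ^ 2 - (1 - 2 * ln (ln (1/y)) / ln y + (2 * b) / ln y)"
      using ev
    proof eventually_elim
      case (elim y)
      then obtain s where s: "Am b y/(2 * y) \<le> s" "s \<le> Ap b y/(2 * y)" "u_y \<mu> z y = s^2"
        and y: "y > 0" and A: "Am b y > 0" by blast
      have X: "Am b y \<le> 2 * y * s" "2 * y * s \<le> Ap b y" using s y by (simp_all add: field_simps)
      have eq: "u_y \<mu> z y / (ln y ^ 2 / (4 * y^2)) = (2 * y * s)^2 / ln y ^ 2"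
        using s(3) by (simp add: power_mult_distrib)
      have "Am b y ^2 \<le> (2 * y * s)^2" "(2 * y * s)^2 \<le> Ap b y ^2"
      proof -
        have "0 \<le> 2 * y * s" using X A by linarith
        then show "Am b y ^2 \<le> (2 * y * s)^2" "(2 * y * s)^2 \<le> Ap b y ^2"
          using X A by (auto intro!: power_mono)
      qed
      then have "Am b y ^2 / ln y ^ 2 \<le> (2 * y * s)^2 / ln y ^ 2" "(2 * y * s)^2 / ln y ^ 2 \<le> Ap b y ^2 / ln y ^ 2"
        by (auto intro!: divide_right_mono)
      then show ?case unfolding eq by linarith
    qed
  qed
  have P2: "(\<lambda>y. M_y \<mu> z y / (y^3 / ln y ^ 2) - 1)
           \<in> O[at_right 0](\<lambda>y. ln \<bar>ln y\<bar> / ln y)"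
  proof (rule squeeze_big[OF _ as11[of b "alpha z" "2 * \<bar>1 - 2 * \<mu>\<bar>"] as12[of b "alpha z" "2 * \<bar>1 - 2 * \<mu>\<bar>"]])
    show "\<forall>\<^sub>F y in at_right 0.
       (ln (Am b y) - ln 2 + ln (1/y) - alpha z) * ln y ^2 / Ap b y ^3 - 2 * \<bar>1 - 2 * \<mu>\<bar> * y * ln y ^ 2 / Am b y ^ 4 - 1
       \<le> M_y \<mu> z y / (y^3 / ln y ^ 2) - 1 \<and>
       M_y \<mu> z y / (y^3 / ln y ^ 2) - 1 \<le>
       (ln (Ap b y) - ln 2 + ln (1/y) - alpha z) * ln y ^2 / Am b y ^3 + 2 * \<bar>1 - 2 * \<mu>\<bar> * y * ln y ^ 2 / Am b y ^ 4 - 1"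
      using ev
    proof eventually_elim
      case (elim y)
      then obtain s where s: "Am b y/(2 * y) \<le> s" "s \<le> Ap b y/(2 * y)" "u_y \<mu> z y = s^2"
        and y: "y > 0" and A: "Am b y > 0" and G: "ln (Am b y) - ln 2 + ln (1/y) - alpha z > 0" by blast
      have X: "Am b y \<le> 2 * y * s" "2 * y * s \<le> Ap b y" using s y by (simp_all add: field_simps)
      have sp: "s > 0" using A y s(1) by (smt (verit) divide_pos_pos)
      have eq: "M_y \<mu> z y / (y^3 / ln y ^ 2) - 1 =
         (ln (2 * y * s) - ln 2 + ln (1/y) - alpha z) * ln y^2 / (2 * y * s)^3 + 2 * (1 - 2 * \<mu>) * y * ln y^2/(2 * y * s)^4 - 1"
        unfolding M_y_def Let_def s(3) by (rule M_ident[OF y sp])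
      show ?case unfolding eq
        using M_bounds[OF y A X G, of "ln y ^ 2" "1 - 2 * \<mu>"] by simp
    qed
  qed
  show ?thesis using P1 P2 by blast
qed

end
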